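(* Let $\mathcal{A}$ be an infinite set with a height function, let $\mathcal{A}(N)$ be the finite set of its elements of height at most $N$, and assume $\log|\mathcal{A}(N)|\asymp\log N$. For each prime $p$ let $f_p:\mathcal{A}\to\{-1,0,1\}$. Suppose there exist $\xi>0$ and multiplicative functions $\eta_+,\eta_-$ with values in $[0,1]$ such that for every pair of coprime positive squarefree integers $q_-,q_+$ with $q_-q_+\le N^{\xi/2}$, $$\frac{1}{|\mathcal{A}(N)|}\left|\left\{x\in\mathcal{A}(N): p\mid q_-\Rightarrow f_p(x)=-1,\ p\mid q_+\Rightarrow f_p(x)=1\right\}\right|=\eta_-(q_-)\eta_+(q_+)+O(N^{-\xi}),$$ and there are constants $c_+,c_-,C>0$ and $M_+,M_-$ such that, uniformly for all $N\ge2$: $\eta_\pm(p)\ll1/p$; $\sum_{p\le N}\eta_\pm(p)=c_\pm\log\log N+M_\pm+O(1/\log N)$; and $\max_{x\in\mathcal{A}(N)}\prod_{p:\,f_p(x)\ne0}p\ll N^C$. Then for every $A_0>0$ there exists $\delta(A_0)>0$ such that $$\left|\left\{x\in\mathcal{A}(N):\sum_pf_p(x)\ge A_0\log\log N\right\}\right|\gg_{A_0}|\mathcal{A}(N)|(\log N)^{-\delta(A_0)}$$ for all $N\ge2$. *)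

theory Defs
  imports Complex_Main "HOL-Computational_Algebra.Primes" "HOL-Computational_Algebra.Squarefree"
begin

definition multiplicative :: "(nat \<Rightarrow> real) \<Rightarrow> bool" where
  "multiplicative g \<longleftrightarrow> g 1 = 1 \<and> (\<forall>m n. m > 0 \<longrightarrow> n > 0 \<longrightarrow> coprime m n \<longrightarrow> g (m * n) = g m * g n)"

definition upto_height :: "'a set \<Rightarrow> ('a \<Rightarrow> real) \<Rightarrow> real \<Rightarrow> 'a set" where
  "upto_height A h N = {x \<in> A. h x \<le> N}"

end

theory Submission
  imports Defs "HOL-Library.FuncSet"
begin
lemma prodQ_pos: "finite Q \<Longrightarrow> \<forall>p\<in>Q. prime (p::nat) \<Longrightarrow> \<Prod>Q > 0"
  by (metis prime_gt_0_nat prod_pos)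

lemma prodQ_dvd: assumes "finite Q" "\<forall>q\<in>Q. prime (q::nat)" "prime p" shows "p dvd \<Prod>Q \<longleftrightarrow> p \<in> Q"
proof
  assume "p dvd \<Prod>Q"
  then obtain q where "q \<in> Q" "p dvd q" using prime_dvd_prod_iff[OF assms(1) assms(3)] by auto
  then show "p \<in> Q" using assms primes_dvd_imp_eq by blast
next
  assume "p \<in> Q" then show "p dvd \<Prod>Q" using dvd_prodI[OF assms(1), of p "\<lambda>x. x"] by simp
qed

lemma prodQ_coprime1: assumes "finite Q" "\<forall>q\<in>Q. prime (q::nat)" "prime x" "x \<notin> Q"
  shows "coprime x (\<Prod>Q)"
proof -
  have "\<not> x dvd \<Prod>Q" using prodQ_dvd assms by blast
  then show ?thesis using assms(3) prime_imp_coprime by blast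
qed

lemma prodQ_sqf: "finite Q \<Longrightarrow> \<forall>q\<in>Q. prime (q::nat) \<Longrightarrow> squarefree (\<Prod>Q)"
proof (induction Q rule: finite_induct)
  case (insert x F)
  have "coprime x (\<Prod>F)"
    using insert prodQ_coprime1 by simp
  then show ?case using insert by (simp add: squarefree_mult_coprime squarefree_prime)
qed simp

lemma prodQ_coprime: assumes "finite Q1" "finite Q2" "\<forall>q\<in>Q1\<union>Q2. prime (q::nat)" "Q1 \<inter> Q2 = {}"
  shows "coprime (\<Prod>Q1) (\<Prod>Q2)"
proof (rule prod_coprime_left)
  fix x assume "x \<in> Q1"
  then show "coprime x (\<Prod>Q2)" using assms prodQ_coprime1[of Q2 x] by auto
qed

lemma prodQ_mult: assumes "multiplicative g" "finite Q" "\<forall>q\<in>Q. prime (q::nat)" shows "g (\<Prod>Q) = (\<Prod>p\<in>Q. g p)"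
  using assms(2,3)
proof (induction Q rule: finite_induct)
  case empty then show ?case using assms(1) by (simp add: multiplicative_def)
next
  case (insert x F)
  have c: "coprime x (\<Prod>F)"
    using insert prodQ_coprime1 by simp
  have "x > 0" "\<Prod>F > 0" using insert prodQ_pos prime_gt_0_nat by auto
  then have "g (x * \<Prod>F) = g x * g (\<Prod>F)" using c assms(1) unfolding multiplicative_def by blast
  then show ?case using insert by simp
qed

lemma card_filter_sum: "finite A \<Longrightarrow> real (card {x\<in>A. P x}) = (\<Sum>x\<in>A. if P x then 1 else 0)"
  by (simp add: sum.If_cases Int_def conj_commute)

lemma prod_of_bool_real: "finite I \<Longrightarrow> (\<Prod>i\<in>I. (if P i then 1 else 0 :: real)) = (if (\<forall>i\<in>I. P i) then 1 else 0)"
  by (induction I rule: finite_induct) auto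

lemma sum_prod_card:
  fixes X :: "'a set" and I :: "'i set" and B :: "'i \<Rightarrow> 'b set" and G :: "'i \<Rightarrow> 'b \<Rightarrow> 'a \<Rightarrow> bool"
  assumes "finite X" "finite I" "\<And>i. i\<in>I \<Longrightarrow> finite (B i)"
  shows "(\<Sum>x\<in>X. \<Prod>i\<in>I. real (card {b\<in>B i. G i b x})) = (\<Sum>w\<in>PiE I B. real (card {x\<in>X. \<forall>i\<in>I. G i (w i) x}))"
proof -
  have "(\<Sum>x\<in>X. \<Prod>i\<in>I. real (card {b\<in>B i. G i b x})) = (\<Sum>x\<in>X. \<Prod>i\<in>I. \<Sum>b\<in>B i. (if G i b x then 1 else 0))"
    using assms by (simp add: card_filter_sum)
  also have "\<dots> = (\<Sum>x\<in>X. \<Sum>w\<in>PiE I B. \<Prod>i\<in>I. (if G i (w i) x then 1 else 0))"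
    using assms by (simp add: prod_sum_PiE)
  also have "\<dots> = (\<Sum>x\<in>X. \<Sum>w\<in>PiE I B. (if (\<forall>i\<in>I. G i (w i) x) then 1 else 0))"
    using assms by (simp add: prod_of_bool_real)
  also have "\<dots> = (\<Sum>w\<in>PiE I B. \<Sum>x\<in>X. (if (\<forall>i\<in>I. G i (w i) x) then 1 else 0))"
    by (rule sum.swap)
  also have "\<dots> = (\<Sum>w\<in>PiE I B. real (card {x\<in>X. \<forall>i\<in>I. G i (w i) x}))"
    using assms by (simp add: card_filter_sum)
  finally show ?thesis .
qed

lemma dens_set:
  fixes f :: "nat \<Rightarrow> 'a \<Rightarrow> int"
  assumes dens: "\<forall>qm qp::nat. qm>0 \<longrightarrow> qp>0 \<longrightarrow> squarefree qm \<longrightarrow> squarefree qp \<longrightarrow> coprime qm qp \<longrightarrow> real (qm*qp) \<le> L \<longrightarrow>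
     \<bar>real (card {x\<in>X. (\<forall>p. prime p \<longrightarrow> p dvd qm \<longrightarrow> f p x = -1) \<and> (\<forall>p. prime p \<longrightarrow> p dvd qp \<longrightarrow> f p x = 1)}) / real (card X) - \<eta>m qm * \<eta>p qp\<bar> \<le> E"
    and mm: "multiplicative \<eta>m" and mp: "multiplicative \<eta>p"
    and fin: "finite Qm" "finite Qp" and pr: "\<forall>q\<in>Qm\<union>Qp. prime q" and dis: "Qm \<inter> Qp = {}"
    and le: "real (\<Prod>Qm * \<Prod>Qp) \<le> L" and finX: "finite X"
  shows "\<bar>real (card {x\<in>X. (\<forall>p\<in>Qm. f p x = -1) \<and> (\<forall>p\<in>Qp. f p x = 1)}) - real (card X) * ((\<Prod>p\<in>Qm. \<eta>m p) * (\<Prod>p\<in>Qp. \<eta>p p))\<bar> \<le> real (card X) * E"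
proof -
  have prm: "\<forall>q\<in>Qm. prime q" and prp: "\<forall>q\<in>Qp. prime q" using pr by auto
  have seq: "{x\<in>X. (\<forall>p. prime p \<longrightarrow> p dvd \<Prod>Qm \<longrightarrow> f p x = -1) \<and> (\<forall>p. prime p \<longrightarrow> p dvd \<Prod>Qp \<longrightarrow> f p x = 1)}
     = {x\<in>X. (\<forall>p\<in>Qm. f p x = -1) \<and> (\<forall>p\<in>Qp. f p x = 1)}"
  proof -
    have d1: "\<And>p. prime p \<Longrightarrow> p dvd \<Prod>Qm \<longleftrightarrow> p \<in> Qm" by (rule prodQ_dvd[OF fin(1) prm])
    have d2: "\<And>p. prime p \<Longrightarrow> p dvd \<Prod>Qp \<longleftrightarrow> p \<in> Qp" by (rule prodQ_dvd[OF fin(2) prp])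
    show ?thesis using prm prp by (auto simp: d1 d2)
  qed
  have h: "\<bar>real (card {x\<in>X. (\<forall>p\<in>Qm. f p x = -1) \<and> (\<forall>p\<in>Qp. f p x = 1)}) / real (card X) - \<eta>m (\<Prod>Qm) * \<eta>p (\<Prod>Qp)\<bar> \<le> E"
    using dens[rule_format, of "\<Prod>Qm" "\<Prod>Qp"] prodQ_pos[OF fin(1) prm] prodQ_pos[OF fin(2) prp]
      prodQ_sqf[OF fin(1) prm] prodQ_sqf[OF fin(2) prp] prodQ_coprime[OF fin pr dis] le seq by simp
  have e: "\<eta>m (\<Prod>Qm) * \<eta>p (\<Prod>Qp) = (\<Prod>p\<in>Qm. \<eta>m p) * (\<Prod>p\<in>Qp. \<eta>p p)"
    using prodQ_mult[OF mm fin(1) prm] prodQ_mult[OF mp fin(2) prp] by simp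
  show ?thesis
  proof (cases "card X = 0")
    case True
    then have "X = {}" using finX by simp
    then show ?thesis by simp
  next
    case False
    then have pos: "real (card X) > 0" by simp
    have "\<bar>real (card {x\<in>X. (\<forall>p\<in>Qm. f p x = -1) \<and> (\<forall>p\<in>Qp. f p x = 1)}) - real (card X) * ((\<Prod>p\<in>Qm. \<eta>m p) * (\<Prod>p\<in>Qp. \<eta>p p))\<bar>
      = real (card X) * \<bar>real (card {x\<in>X. (\<forall>p\<in>Qm. f p x = -1) \<and> (\<forall>p\<in>Qp. f p x = 1)}) / real (card X) - \<eta>m (\<Prod>Qm) * \<eta>p (\<Prod>Qp)\<bar>"
      using pos by (simp add: e abs_mult[symmetric] field_simps)
    also have "\<dots> \<le> real (card X) * E" using h pos by simp
    finally show ?thesis .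
  qed
qed

lemma card_le_bound:
  assumes "\<forall>p\<in>S. 0 < p \<and> real p \<le> z" "0 \<le> z" shows "real (card (S::nat set)) \<le> z"
proof -
  have "S \<subseteq> {1..nat \<lfloor>z\<rfloor>}" using assms by (auto simp: le_nat_floor)
  then have "card S \<le> card {1..nat \<lfloor>z\<rfloor>}" by (intro card_mono) auto
  then have "card S \<le> nat \<lfloor>z\<rfloor>" by simp
  then have "real (card S) \<le> real (nat \<lfloor>z\<rfloor>)" by linarith
  also have "\<dots> = of_int \<lfloor>z\<rfloor>" using assms(2) by simp
  also have "\<dots> \<le> z" by simp
  finally show ?thesis .
qed

lemma sum_sq_le_card:
  fixes a :: "'b \<Rightarrow> real"
  assumes "finite A"
  shows "(\<Sum>x\<in>A. a x)^2 \<le> real (card A) * (\<Sum>x\<in>A. (a x)^2)"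
proof (cases "A = {}")
  case True then show ?thesis by simp
next
  case False
  define c where "c = real (card A)"
  have c0: "c > 0" using False assms by (simp add: c_def card_gt_0_iff)
  define \<mu> where "\<mu> = (\<Sum>x\<in>A. a x) / c"
  have "0 \<le> (\<Sum>x\<in>A. (a x - \<mu>)^2)" by (simp add: sum_nonneg)
  also have "\<dots> = (\<Sum>x\<in>A. (a x)^2) - 2 * \<mu> * (\<Sum>x\<in>A. a x) + c * \<mu>^2"
    by (simp add: power2_diff sum.distrib sum_subtractf sum_distrib_left sum_distrib_right c_def algebra_simps)
  also have "\<dots> = (\<Sum>x\<in>A. (a x)^2) - (\<Sum>x\<in>A. a x)^2 / c"
    using c0 by (simp add: \<mu>_def power2_eq_square field_simps)
  finally have "(\<Sum>x\<in>A. a x)^2 / c \<le> (\<Sum>x\<in>A. (a x)^2)" by simp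
  then show ?thesis using c0 by (simp add: c_def divide_le_eq mult.commute)
qed

lemma final_arith:
  fixes n U V Y SW cG P0 P2 LE r sM m1 :: real
  assumes npos: "n > 0" and A: "n * (P0 - LE) \<le> U" and B: "V \<le> n * (sM * P0 + LE)"
    and C: "Y \<le> n * (P2 + LE)" and E: "U - V / m1 \<le> SW" and m1: "1 \<le> m1"
    and sM: "sM / m1 \<le> 1/4" and F: "SW^2 \<le> cG * Y" and LE0: "0 \<le> LE"
    and LE1: "LE \<le> P0 / 8" and LE2: "LE \<le> P2" and D2: "r * P2 \<le> P0^2"
    and P0: "0 < P0" and P2: "0 < P2" and cG: "0 \<le> cG"
  shows "n / 8 * r \<le> cG"
proof -
  have "V / m1 \<le> n * (sM * P0 + LE) / m1" using B m1 by (simp add: divide_right_mono)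
  also have "\<dots> = n * P0 * (sM / m1) + n * LE / m1" using m1 by (simp add: field_simps)
  also have "n * P0 * (sM / m1) \<le> n * P0 * (1/4)" using sM npos P0 by (intro mult_left_mono) auto
  also have "n * LE / m1 \<le> n * LE" 
  proof -
    have "0 \<le> n * LE" using npos LE0 by simp
    then have "n * LE * 1 \<le> n * LE * m1" by (rule mult_left_mono[OF m1])
    then show ?thesis using m1 by (simp add: divide_le_eq)
  qed
  finally have V': "V / m1 \<le> n * P0 / 4 + n * LE" by simp
  have "n * LE \<le> n * (P0 / 8)" using LE1 npos by (simp add: mult_left_mono)
  then have SW: "n * P0 / 2 \<le> SW" using A E V' by (simp add: algebra_simps) 
  have "n * LE \<le> n * P2" using LE2 npos by (simp add: mult_left_mono)
  then have Y': "Y \<le> 2 * n * P2" using C by (simp add: algebra_simps)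
  have "(n * P0 / 2)^2 \<le> SW^2" using SW npos P0 by (intro power_mono) auto
  also have "\<dots> \<le> cG * Y" by (rule F)
  also have "\<dots> \<le> cG * (2 * n * P2)" using Y' cG by (rule mult_left_mono)
  finally have G1: "(n * P0 / 2)^2 \<le> cG * (2 * n * P2)" .
  have "n^2 * (r * P2) \<le> n^2 * P0^2" using D2 by (simp add: mult_left_mono)
  also have "n^2 * P0^2 = 4 * (n * P0 / 2)^2" by (simp add: power2_eq_square)
  finally have "n^2 * (r * P2) \<le> 4 * (cG * (2 * n * P2))" using G1 by linarith
  then have "(n / 8 * r) * (8 * n * P2) \<le> cG * (8 * n * P2)" by (simp add: power2_eq_square algebra_simps)
  then show ?thesis using npos P2 by (simp add: mult_le_cancel_right mult.commute)
qed

lemma pair_sum_bound: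
  fixes \<eta> :: "nat \<Rightarrow> real"
  assumes finP: "finite P" and nn: "\<forall>p\<in>P. 0 \<le> \<eta> p"
  shows "(\<Sum>b\<in>P \<times> P. \<Prod>q\<in>{fst b, snd b}. \<eta> q) \<le> (\<Sum>p\<in>P. \<eta> p)^2 + (\<Sum>p\<in>P. \<eta> p)"
proof -
  have "(\<Sum>b\<in>P \<times> P. \<Prod>q\<in>{fst b, snd b}. \<eta> q) \<le> (\<Sum>b\<in>P \<times> P. \<eta> (fst b) * \<eta> (snd b) + (if fst b = snd b then \<eta> (fst b) else 0))"
  proof (rule sum_mono)
    fix b assume b: "b \<in> P \<times> P"
    show "(\<Prod>q\<in>{fst b, snd b}. \<eta> q) \<le> \<eta> (fst b) * \<eta> (snd b) + (if fst b = snd b then \<eta> (fst b) else 0)"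
    proof (cases "fst b = snd b")
      case True
      have "0 \<le> \<eta> (fst b) * \<eta> (fst b)" using nn b by auto
      then show ?thesis using True by simp
    next
      case False
      then show ?thesis by simp
    qed
  qed
  also have "\<dots> = (\<Sum>a\<in>P. \<Sum>c\<in>P. \<eta> a * \<eta> c + (if a = c then \<eta> a else 0))"
    by (subst sum.cartesian_product') (simp only: fst_conv snd_conv)
  also have "\<dots> = (\<Sum>a\<in>P. \<eta> a * (\<Sum>c\<in>P. \<eta> c) + \<eta> a)"
  proof (rule sum.cong[OF refl])
    fix a assume a: "a \<in> P"
    have "(\<Sum>c\<in>P. \<eta> a * \<eta> c + (if a = c then \<eta> a else 0)) = (\<Sum>c\<in>P. \<eta> a * \<eta> c) + (\<Sum>c\<in>P. (if a = c then \<eta> a else 0))"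
      by (rule sum.distrib)
    also have "(\<Sum>c\<in>P. (if a = c then \<eta> a else 0)) = \<eta> a" using finP a by (simp add: sum.delta)
    finally show "(\<Sum>c\<in>P. \<eta> a * \<eta> c + (if a = c then \<eta> a else 0)) = \<eta> a * (\<Sum>c\<in>P. \<eta> c) + \<eta> a"
      by (simp add: sum_distrib_left)
  qed
  also have "\<dots> = (\<Sum>p\<in>P. \<eta> p)^2 + (\<Sum>p\<in>P. \<eta> p)"
    by (simp add: sum.distrib sum_distrib_right[symmetric] power2_eq_square)
  finally show ?thesis .
qed

lemma PiE_facts:
  fixes w :: "nat \<Rightarrow> nat" and P :: "nat \<Rightarrow> nat set"
  assumes w: "w \<in> PiE I P" and finI: "finite I"
    and Ppr: "\<forall>i\<in>I. \<forall>p\<in>P i. prime p \<and> real p \<le> z"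
    and Pdis: "\<forall>i\<in>I. \<forall>j\<in>I. i \<noteq> j \<longrightarrow> P i \<inter> P j = {}"
  shows "inj_on w I" "\<forall>q\<in>w`I. prime q" "finite (w`I)" "real (\<Prod>(w`I)) \<le> z ^ card I"
    "\<And>g::nat\<Rightarrow>real. (\<Prod>p\<in>w`I. g p) = (\<Prod>i\<in>I. g (w i))"
proof -
  have wi: "\<And>i. i \<in> I \<Longrightarrow> w i \<in> P i" using w by (auto simp: PiE_def Pi_def)
  show inj: "inj_on w I"
  proof (rule inj_onI)
    fix i j assume "i \<in> I" "j \<in> I" "w i = w j"
    show "i = j"
    proof (rule ccontr)
      assume "i \<noteq> j"
      then have "P i \<inter> P j = {}" using Pdis \<open>i \<in> I\<close> \<open>j \<in> I\<close> by simp
      moreover have "w i \<in> P i" "w j \<in> P j" using wi \<open>i \<in> I\<close> \<open>j \<in> I\<close> by auto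
      ultimately show False using \<open>w i = w j\<close> by auto
    qed
  qed
  show "\<forall>q\<in>w`I. prime q" using wi Ppr by simp
  show "finite (w`I)" using finI by simp
  show g: "\<And>g::nat\<Rightarrow>real. (\<Prod>p\<in>w`I. g p) = (\<Prod>i\<in>I. g (w i))"
    using prod.reindex[OF inj] by simp
  have "real (\<Prod>(w`I)) = (\<Prod>p\<in>w`I. real p)" by simp
  also have "\<dots> = (\<Prod>i\<in>I. real (w i))" by (rule g)
  also have "\<dots> \<le> (\<Prod>i\<in>I. z)" 
  proof (rule prod_mono)
    fix i assume "i \<in> I"
    then have "w i \<in> P i" by (rule wi)
    then show "0 \<le> real (w i) \<and> real (w i) \<le> z" using Ppr \<open>i \<in> I\<close> by simp
  qed
  finally show "real (\<Prod>(w`I)) \<le> z ^ card I" by simp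
qed

lemma core:
  fixes X :: "'a set" and f :: "nat \<Rightarrow> 'a \<Rightarrow> int" and \<eta>p \<eta>m :: "nat \<Rightarrow> real"
    and P :: "nat \<Rightarrow> nat set" and k m :: nat and z z' L E \<sigma> B0 T :: real
  assumes finX: "finite X"
    and fr: "\<forall>x\<in>X. \<forall>p. prime p \<longrightarrow> f p x \<in> {-1,0,1}"
    and finF: "\<forall>x\<in>X. finite {p. prime p \<and> f p x \<noteq> 0}"
    and dens: "\<forall>Qm Qp. finite Qm \<longrightarrow> finite Qp \<longrightarrow> (\<forall>q\<in>Qm\<union>Qp. prime q) \<longrightarrow> Qm \<inter> Qp = {} \<longrightarrow> real (\<Prod>Qm * \<Prod>Qp) \<le> L \<longrightarrow>
        \<bar>real (card {x\<in>X. (\<forall>p\<in>Qm. f p x = -1) \<and> (\<forall>p\<in>Qp. f p x = 1)}) - real (card X) * ((\<Prod>p\<in>Qm. \<eta>m p) * (\<Prod>p\<in>Qp. \<eta>p p))\<bar> \<le> real (card X) * E"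
    and rp: "\<forall>p. prime p \<longrightarrow> 0 \<le> \<eta>p p" and rm: "\<forall>p. prime p \<longrightarrow> 0 \<le> \<eta>m p"
    and Pfin: "\<forall>i<k. finite (P i)" and Ppr: "\<forall>i<k. \<forall>p\<in>P i. prime p \<and> real p \<le> z"
    and Pdis: "\<forall>i<k. \<forall>j<k. i \<noteq> j \<longrightarrow> P i \<inter> P j = {}"
    and Pmass: "\<forall>i<k. \<sigma> \<le> (\<Sum>p\<in>P i. \<eta>p p)" and \<sigma>pos: "0 < \<sigma>" and \<sigma>1: "\<sigma> \<le> 1"
    and z1: "1 \<le> z" and z'1: "1 \<le> z'" and zL1: "z^k * z' \<le> L" and zL2: "z^(2*k) \<le> L"
    and E0: "0 \<le> E" and LE: "L * E \<le> \<sigma>^(2*k) / 8"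
    and sm: "(\<Sum>p\<in>{p. prime p \<and> real p \<le> z'}. \<eta>m p) * 4 \<le> real m + 1"
    and large: "\<forall>x\<in>X. real (card {p. prime p \<and> f p x \<noteq> 0 \<and> z' < real p}) \<le> B0"
    and kT: "T + real m + B0 \<le> real k"
  shows "real (card X) / 8 * (\<sigma>/(1+\<sigma>))^k \<le> real (card {x\<in>X. T \<le> real_of_int (\<Sum>p\<in>{p. prime p \<and> f p x \<noteq> 0}. f p x)})"
proof -
  define I where "I = {..<k}"
  have finI: "finite I" and cardI: "card I = k" by (simp_all add: I_def)
  have PfinI: "\<And>i. i \<in> I \<Longrightarrow> finite (P i)" using Pfin I_def by simp
  have PprI: "\<forall>i\<in>I. \<forall>p\<in>P i. prime p \<and> real p \<le> z" using Ppr I_def by simp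
  have PdisI: "\<forall>i\<in>I. \<forall>j\<in>I. i \<noteq> j \<longrightarrow> P i \<inter> P j = {}" using Pdis I_def by simp
  define Pm where "Pm = {p. prime p \<and> real p \<le> z'}"
  have finPm: "finite Pm"
  proof -
    have "Pm \<subseteq> {..nat \<lfloor>z'\<rfloor>}" unfolding Pm_def by (auto simp: le_nat_floor)
    then show ?thesis by (rule finite_subset) simp
  qed
  have cardPm: "real (card Pm) \<le> z'"
    by (rule card_le_bound) (use z'1 prime_gt_0_nat in \<open>auto simp: Pm_def\<close>)
  define s where "s = (\<lambda>i. \<Sum>p\<in>P i. \<eta>p p)"
  define sM where "sM = (\<Sum>p\<in>Pm. \<eta>m p)"
  define Z where "Z = (\<lambda>x. \<Prod>i\<in>I. real (card {p\<in>P i. f p x = 1}))"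
  define Sm where "Sm = (\<lambda>x. real (card {p\<in>Pm. f p x = -1}))"
  define W where "W = (\<lambda>x. if Sm x \<le> real m then Z x else 0)"
  define \<Pi>0 where "\<Pi>0 = (\<Prod>i\<in>I. s i)"
  define \<Pi>2 where "\<Pi>2 = (\<Prod>i\<in>I. (s i)^2 + s i)"
  define n where "n = real (card X)"
  have n0: "0 \<le> n" by (simp add: n_def)
  have Z0: "\<And>x. 0 \<le> Z x" by (simp add: Z_def prod_nonneg)
  have Sm0: "\<And>x. 0 \<le> Sm x" by (simp add: Sm_def)
  have sge: "\<And>i. i \<in> I \<Longrightarrow> \<sigma> \<le> s i" using Pmass by (simp add: I_def s_def)
  have cardPi: "real (card (PiE I P)) \<le> z^k"
  proof -
    have "real (card (PiE I P)) = (\<Prod>i\<in>I. real (card (P i)))" using finI by (simp add: card_PiE)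
    also have "\<dots> \<le> (\<Prod>i\<in>I. z)"
    proof (rule prod_mono)
      fix i assume i: "i \<in> I"
      have "real (card (P i)) \<le> z" by (rule card_le_bound) (use i PprI z1 prime_gt_0_nat in auto)
      then show "0 \<le> real (card (P i)) \<and> real (card (P i)) \<le> z" by simp
    qed
    finally show ?thesis using cardI by simp
  qed
  have stepA: "(\<Sum>x\<in>X. Z x) \<ge> n * (\<Pi>0 - L * E)"
  proof -
    have zkL: "z^k \<le> L"
    proof -
      have "z^k * 1 \<le> z^k * z'" using z'1 z1 by (intro mult_left_mono) auto
      then show ?thesis using zL1 by simp
    qed
    have "(\<Sum>x\<in>X. Z x) = (\<Sum>w\<in>PiE I P. real (card {x\<in>X. \<forall>i\<in>I. f (w i) x = 1}))"
      unfolding Z_def by (rule sum_prod_card[where G="\<lambda>i b x. f b x = 1"]) (use finX finI PfinI in auto)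
    also have "\<dots> \<ge> (\<Sum>w\<in>PiE I P. n * ((\<Prod>i\<in>I. \<eta>p (w i)) - E))"
    proof (rule sum_mono)
      fix w assume w: "w \<in> PiE I P"
      note wf = PiE_facts[OF w finI PprI PdisI]
      have le: "real (\<Prod>{} * \<Prod>(w`I)) \<le> L" using wf(4) cardI zkL by simp
      have pr: "\<forall>q\<in>{} \<union> w`I. prime q" using wf(2) by simp
      have h: "\<bar>real (card {x\<in>X. (\<forall>p\<in>{}. f p x = -1) \<and> (\<forall>p\<in>w`I. f p x = 1)}) - real (card X) * ((\<Prod>p\<in>{}. \<eta>m p) * (\<Prod>p\<in>w`I. \<eta>p p))\<bar> \<le> real (card X) * E"
        using dens pr le wf(3) by blast
      have seteq: "{x\<in>X. (\<forall>p\<in>{}. f p x = -1) \<and> (\<forall>p\<in>w`I. f p x = 1)} = {x\<in>X. \<forall>i\<in>I. f (w i) x = 1}" by auto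
      have "\<bar>real (card {x\<in>X. \<forall>i\<in>I. f (w i) x = 1}) - n * (\<Prod>i\<in>I. \<eta>p (w i))\<bar> \<le> n * E"
        using h unfolding seteq wf(5) n_def by simp
      then show "n * ((\<Prod>i\<in>I. \<eta>p (w i)) - E) \<le> real (card {x\<in>X. \<forall>i\<in>I. f (w i) x = 1})"
        by (simp add: abs_le_iff algebra_simps)
    qed
    also have "(\<Sum>w\<in>PiE I P. n * ((\<Prod>i\<in>I. \<eta>p (w i)) - E)) = n * ((\<Sum>w\<in>PiE I P. \<Prod>i\<in>I. \<eta>p (w i)) - real (card (PiE I P)) * E)"
      by (simp add: sum_distrib_left[symmetric] sum_subtractf)
    also have "(\<Sum>w\<in>PiE I P. \<Prod>i\<in>I. \<eta>p (w i)) = \<Pi>0"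
      unfolding \<Pi>0_def s_def using prod_sum_PiE[OF finI PfinI, where f="\<lambda>i p. \<eta>p p"] by simp
    finally have "n * (\<Pi>0 - real (card (PiE I P)) * E) \<le> (\<Sum>x\<in>X. Z x)" .
    moreover have "n * (\<Pi>0 - L * E) \<le> n * (\<Pi>0 - real (card (PiE I P)) * E)"
    proof -
      have "real (card (PiE I P)) * E \<le> L * E" using cardPi zkL E0 by (intro mult_right_mono) auto
      then show ?thesis using n0 by (intro mult_left_mono) auto
    qed
    ultimately show ?thesis by linarith
  qed
  have stepB: "(\<Sum>x\<in>X. Z x * Sm x) \<le> n * (sM * \<Pi>0 + L * E)"
  proof -
    have "(\<Sum>x\<in>X. Z x * Sm x) = (\<Sum>x\<in>X. \<Sum>p\<in>Pm. if f p x = -1 then Z x else 0)"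
    proof (rule sum.cong[OF refl])
      fix x
      have "Z x * Sm x = Z x * (\<Sum>p\<in>Pm. if f p x = -1 then 1 else 0)"
        unfolding Sm_def using card_filter_sum[OF finPm] by simp
      also have "\<dots> = (\<Sum>p\<in>Pm. Z x * (if f p x = -1 then 1 else 0))" by (rule sum_distrib_left)
      also have "\<dots> = (\<Sum>p\<in>Pm. if f p x = -1 then Z x else 0)" by (intro sum.cong) auto
      finally show "Z x * Sm x = (\<Sum>p\<in>Pm. if f p x = -1 then Z x else 0)" .
    qed
    also have "\<dots> = (\<Sum>p\<in>Pm. \<Sum>x\<in>X. if f p x = -1 then Z x else 0)" by (rule sum.swap)
    also have "\<dots> = (\<Sum>p\<in>Pm. \<Sum>x\<in>{x\<in>X. f p x = -1}. Z x)"
      by (rule sum.cong[OF refl]) (simp add: sum.inter_filter[OF finX])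
    also have "\<dots> = (\<Sum>p\<in>Pm. \<Sum>w\<in>PiE I P. real (card {x\<in>{x\<in>X. f p x = -1}. \<forall>i\<in>I. f (w i) x = 1}))"
      unfolding Z_def by (intro sum.cong refl sum_prod_card[where G="\<lambda>i b x. f b x = 1"]) (use finX finI PfinI in auto)
    also have "\<dots> \<le> (\<Sum>p\<in>Pm. \<Sum>w\<in>PiE I P. n * (\<eta>m p * (\<Prod>i\<in>I. \<eta>p (w i)) + E))"
    proof (intro sum_mono)
      fix p w assume p: "p \<in> Pm" and w: "w \<in> PiE I P"
      note wf = PiE_facts[OF w finI PprI PdisI]
      have pp: "prime p" "real p \<le> z'" using p by (auto simp: Pm_def)
      have wi: "\<And>i. i \<in> I \<Longrightarrow> w i \<in> P i" using w by (auto simp: PiE_def Pi_def)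
      have "0 \<le> (\<Prod>i\<in>I. \<eta>p (w i))"
        by (rule prod_nonneg) (use wi PprI rp in blast)
      then have nonneg: "0 \<le> n * (\<eta>m p * (\<Prod>i\<in>I. \<eta>p (w i)) + E)"
        using rm pp(1) n0 E0 by simp
      show "real (card {x\<in>{x\<in>X. f p x = -1}. \<forall>i\<in>I. f (w i) x = 1}) \<le> n * (\<eta>m p * (\<Prod>i\<in>I. \<eta>p (w i)) + E)"
      proof (cases "p \<in> w`I")
        case True
        then obtain i where i: "i \<in> I" "p = w i" by auto
        have "{x\<in>{x\<in>X. f p x = -1}. \<forall>i\<in>I. f (w i) x = 1} = {}" using i by force
        then show ?thesis using nonneg by (simp only: card.empty of_nat_0)
      next
        case False
        have seteq: "{x\<in>X. (\<forall>q\<in>{p}. f q x = -1) \<and> (\<forall>q\<in>w`I. f q x = 1)} = {x\<in>{x\<in>X. f p x = -1}. \<forall>i\<in>I. f (w i) x = 1}" by auto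
        have "real (\<Prod>{p} * \<Prod>(w`I)) = real p * real (\<Prod>(w`I))" by simp
        also have "\<dots> \<le> z' * z^k" using pp(2) wf(4) cardI by (intro mult_mono) (auto simp: prod_nonneg)
        also have "\<dots> \<le> L" using zL1 by (simp add: mult.commute)
        finally have le: "real (\<Prod>{p} * \<Prod>(w`I)) \<le> L" .
        have pr: "\<forall>q\<in>{p} \<union> w`I. prime q" using wf(2) pp(1) by simp
        have dj: "{p} \<inter> w`I = {}" using False by simp
        have h: "\<bar>real (card {x\<in>X. (\<forall>q\<in>{p}. f q x = -1) \<and> (\<forall>q\<in>w`I. f q x = 1)}) - real (card X) * ((\<Prod>q\<in>{p}. \<eta>m q) * (\<Prod>q\<in>w`I. \<eta>p q))\<bar> \<le> real (card X) * E"
          by (rule dens[rule_format]) (use pr dj le wf(3) in \<open>simp_all only: finite.emptyI finite_insert\<close>)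
        have "\<bar>real (card {x\<in>{x\<in>X. f p x = -1}. \<forall>i\<in>I. f (w i) x = 1}) - n * (\<eta>m p * (\<Prod>i\<in>I. \<eta>p (w i)))\<bar> \<le> n * E"
          using h unfolding seteq wf(5) n_def by simp
        then show ?thesis by (simp add: abs_le_iff algebra_simps)
      qed
    qed
    also have "\<dots> = n * (sM * \<Pi>0 + real (card Pm) * real (card (PiE I P)) * E)"
    proof -
      have inner: "(\<Sum>w\<in>PiE I P. n * (\<eta>m p * (\<Prod>i\<in>I. \<eta>p (w i)) + E)) = n * (\<eta>m p * \<Pi>0 + real (card (PiE I P)) * E)" for p
      proof -
        have "(\<Sum>w\<in>PiE I P. \<Prod>i\<in>I. \<eta>p (w i)) = \<Pi>0"
          unfolding \<Pi>0_def s_def using prod_sum_PiE[OF finI PfinI, where f="\<lambda>i p. \<eta>p p"] by simp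
        then show ?thesis by (simp add: sum.distrib sum_distrib_left[symmetric] algebra_simps)
      qed
      show ?thesis unfolding inner sM_def
        by (simp add: sum.distrib sum_distrib_left[symmetric] sum_distrib_right[symmetric] algebra_simps)
    qed
    also have "\<dots> \<le> n * (sM * \<Pi>0 + L * E)"
    proof -
      have "real (card Pm) * real (card (PiE I P)) \<le> z' * z^k" using cardPm cardPi by (intro mult_mono) auto
      also have "\<dots> \<le> L" using zL1 by (simp add: mult.commute)
      finally have "real (card Pm) * real (card (PiE I P)) * E \<le> L * E" using E0 by (intro mult_right_mono) auto
      then show ?thesis using n0 by (intro mult_left_mono) auto
    qed
    finally show ?thesis .
  qed
  have stepC: "(\<Sum>x\<in>X. (Z x)^2) \<le> n * (\<Pi>2 + L * E)"
  proof -
    define PP where "PP = (\<lambda>i. P i \<times> P i)"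
    define g where "g = (\<lambda>b::nat\<times>nat. \<Prod>q\<in>{fst b, snd b}. \<eta>p q)"
    have PPfin: "\<And>i. i\<in>I \<Longrightarrow> finite (PP i)" using PfinI by (simp add: PP_def)
    have "(\<Sum>x\<in>X. (Z x)^2) = (\<Sum>x\<in>X. \<Prod>i\<in>I. real (card {b\<in>PP i. f (fst b) x = 1 \<and> f (snd b) x = 1}))"
    proof (rule sum.cong[OF refl])
      fix x
      have "(Z x)^2 = (\<Prod>i\<in>I. (real (card {p\<in>P i. f p x = 1}))^2)" by (simp add: Z_def prod_power_distrib)
      also have "\<dots> = (\<Prod>i\<in>I. real (card {b\<in>PP i. f (fst b) x = 1 \<and> f (snd b) x = 1}))"
      proof (rule prod.cong[OF refl])
        fix i
        have "{b\<in>PP i. f (fst b) x = 1 \<and> f (snd b) x = 1} = {p\<in>P i. f p x = 1} \<times> {p\<in>P i. f p x = 1}"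
          by (auto simp: PP_def)
        then show "(real (card {p\<in>P i. f p x = 1}))^2 = real (card {b\<in>PP i. f (fst b) x = 1 \<and> f (snd b) x = 1})"
          by (simp add: card_cartesian_product power2_eq_square)
      qed
      finally show "(Z x)^2 = (\<Prod>i\<in>I. real (card {b\<in>PP i. f (fst b) x = 1 \<and> f (snd b) x = 1}))" .
    qed
    also have "\<dots> = (\<Sum>w\<in>PiE I PP. real (card {x\<in>X. \<forall>i\<in>I. f (fst (w i)) x = 1 \<and> f (snd (w i)) x = 1}))"
      by (rule sum_prod_card[where G="\<lambda>i b x. f (fst b) x = 1 \<and> f (snd b) x = 1"]) (use finX finI PPfin in auto)
    also have "\<dots> \<le> (\<Sum>w\<in>PiE I PP. n * ((\<Prod>i\<in>I. g (w i)) + E))"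
    proof (rule sum_mono)
      fix w assume w: "w \<in> PiE I PP"
      have wi: "\<And>i. i \<in> I \<Longrightarrow> fst (w i) \<in> P i \<and> snd (w i) \<in> P i"
        using w by (auto simp: PiE_def Pi_def PP_def mem_Times_iff)
      define Aw where "Aw = (\<lambda>i. {fst (w i), snd (w i)})"
      define Q where "Q = (\<Union>i\<in>I. Aw i)"
      have finQ: "finite Q" using finI by (simp add: Q_def Aw_def)
      have prQ: "\<forall>q\<in>Q. prime q" using wi PprI by (auto simp: Q_def Aw_def)
      have disA: "\<forall>i\<in>I. \<forall>j\<in>I. i \<noteq> j \<longrightarrow> Aw i \<inter> Aw j = {}"
      proof (intro ballI impI)
        fix i j assume ij: "i \<in> I" "j \<in> I" "i \<noteq> j"
        then have "P i \<inter> P j = {}" using PdisI by simp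
        moreover have "Aw i \<subseteq> P i" "Aw j \<subseteq> P j" using wi ij by (auto simp: Aw_def)
        ultimately show "Aw i \<inter> Aw j = {}" by blast
      qed
      have finA: "\<forall>i\<in>I. finite (Aw i)" by (simp add: Aw_def)
      have pe: "(\<Prod>q\<in>Q. h q) = (\<Prod>i\<in>I. \<Prod>q\<in>Aw i. h q)" for h :: "nat \<Rightarrow> real"
        unfolding Q_def by (rule prod.UNION_disjoint[OF finI finA disA])
      have "real (\<Prod>{} * \<Prod>Q) = (\<Prod>q\<in>Q. real q)" by simp
      also have "\<dots> = (\<Prod>i\<in>I. \<Prod>q\<in>Aw i. real q)" by (rule pe)
      also have "\<dots> \<le> (\<Prod>i\<in>I. z^2)"
      proof (rule prod_mono)
        fix i assume i: "i \<in> I"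
        have a: "real (fst (w i)) \<le> z" "real (snd (w i)) \<le> z" using wi[OF i] PprI i by auto
        have "1 \<le> fst (w i)" "1 \<le> snd (w i)" using wi[OF i] PprI i prime_ge_1_nat by auto
        then have a1: "1 \<le> real (fst (w i))" "1 \<le> real (snd (w i))" by simp_all
        have "(\<Prod>q\<in>Aw i. real q) \<le> z^2"
        proof (cases "fst (w i) = snd (w i)")
          case True
          then have "(\<Prod>q\<in>Aw i. real q) = real (fst (w i))" by (simp add: Aw_def)
          also have "\<dots> \<le> z" by (rule a(1))
          also have "z \<le> z^2" using z1 by (simp add: power2_eq_square)
          finally show ?thesis .
        next
          case False
          then have "(\<Prod>q\<in>Aw i. real q) = real (fst (w i)) * real (snd (w i))" by (simp add: Aw_def)
          also have "\<dots> \<le> z * z" using a a1 by (intro mult_mono) auto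
          finally show ?thesis by (simp add: power2_eq_square)
        qed
        moreover have "0 \<le> (\<Prod>q\<in>Aw i. real q)" by (simp add: prod_nonneg)
        ultimately show "0 \<le> (\<Prod>q\<in>Aw i. real q) \<and> (\<Prod>q\<in>Aw i. real q) \<le> z^2" by simp
      qed
      also have "\<dots> = z^(2*k)" using cardI by (simp add: power_mult[symmetric] mult.commute)
      finally have le: "real (\<Prod>{} * \<Prod>Q) \<le> L" using zL2 by linarith
      have pr: "\<forall>q\<in>{} \<union> Q. prime q" using prQ by simp
      have h: "\<bar>real (card {x\<in>X. (\<forall>q\<in>{}. f q x = -1) \<and> (\<forall>q\<in>Q. f q x = 1)}) - real (card X) * ((\<Prod>q\<in>{}. \<eta>m q) * (\<Prod>q\<in>Q. \<eta>p q))\<bar> \<le> real (card X) * E"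
        by (rule dens[rule_format]) (use pr le finQ in \<open>simp_all only: finite.emptyI Int_empty_left\<close>)
      have seteq: "{x\<in>X. (\<forall>q\<in>{}. f q x = -1) \<and> (\<forall>q\<in>Q. f q x = 1)} = {x\<in>X. \<forall>i\<in>I. f (fst (w i)) x = 1 \<and> f (snd (w i)) x = 1}"
        by (auto simp: Q_def Aw_def)
      have ge: "(\<Prod>q\<in>Q. \<eta>p q) = (\<Prod>i\<in>I. g (w i))" unfolding pe g_def Aw_def ..
      have "\<bar>real (card {x\<in>X. \<forall>i\<in>I. f (fst (w i)) x = 1 \<and> f (snd (w i)) x = 1}) - n * (\<Prod>i\<in>I. g (w i))\<bar> \<le> n * E"
        using h unfolding seteq ge n_def by simp
      then show "real (card {x\<in>X. \<forall>i\<in>I. f (fst (w i)) x = 1 \<and> f (snd (w i)) x = 1}) \<le> n * ((\<Prod>i\<in>I. g (w i)) + E)"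
        by (simp add: abs_le_iff algebra_simps)
    qed
    also have "\<dots> = n * ((\<Sum>w\<in>PiE I PP. \<Prod>i\<in>I. g (w i)) + real (card (PiE I PP)) * E)"
      by (simp add: sum.distrib sum_distrib_left[symmetric] algebra_simps)
    also have "\<dots> \<le> n * (\<Pi>2 + L * E)"
    proof -
      have "(\<Sum>w\<in>PiE I PP. \<Prod>i\<in>I. g (w i)) = (\<Prod>i\<in>I. \<Sum>b\<in>PP i. g b)"
        using prod_sum_PiE[OF finI PPfin, where f="\<lambda>i b. g b"] by simp
      also have "\<dots> \<le> \<Pi>2" unfolding \<Pi>2_def
      proof (rule prod_mono)
        fix i assume i: "i \<in> I"
        have nn: "\<forall>p\<in>P i. 0 \<le> \<eta>p p" using PprI rp i by auto
        have "(\<Sum>b\<in>PP i. g b) \<le> (s i)^2 + s i"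
          unfolding PP_def g_def s_def by (rule pair_sum_bound[OF PfinI[OF i] nn])
        moreover have "0 \<le> (\<Sum>b\<in>PP i. g b)" unfolding g_def PP_def
          using nn by (intro sum_nonneg prod_nonneg) (auto simp: mem_Times_iff)
        ultimately show "0 \<le> (\<Sum>b\<in>PP i. g b) \<and> (\<Sum>b\<in>PP i. g b) \<le> (s i)^2 + s i" by simp
      qed
      finally have S1: "(\<Sum>w\<in>PiE I PP. \<Prod>i\<in>I. g (w i)) \<le> \<Pi>2" .
      have "real (card (PiE I PP)) = (\<Prod>i\<in>I. real (card (P i)) * real (card (P i)))"
        using finI by (simp add: card_PiE PP_def card_cartesian_product)
      also have "\<dots> \<le> (\<Prod>i\<in>I. z * z)"
      proof (rule prod_mono)
        fix i assume i: "i \<in> I"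
        have "real (card (P i)) \<le> z" by (rule card_le_bound) (use i PprI z1 prime_gt_0_nat in auto)
        then show "0 \<le> real (card (P i)) * real (card (P i)) \<and> real (card (P i)) * real (card (P i)) \<le> z * z"
          by (simp add: mult_mono)
      qed
      also have "\<dots> = z^(2*k)" using cardI by (simp add: power_mult[symmetric] power2_eq_square[symmetric] mult.commute)
      finally have "real (card (PiE I PP)) \<le> L" using zL2 by linarith
      then have S2: "real (card (PiE I PP)) * E \<le> L * E" using E0 by (rule mult_right_mono)
      show ?thesis using S1 S2 n0 by (intro mult_left_mono) auto
    qed
    finally show ?thesis .
  qed
  have D1: "\<sigma>^k \<le> \<Pi>0"
  proof -
    have "\<sigma>^k = (\<Prod>i\<in>I. \<sigma>)" using cardI by simp
    also have "\<dots> \<le> \<Pi>0" unfolding \<Pi>0_def by (rule prod_mono) (use sge \<sigma>pos in force)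
    finally show ?thesis .
  qed
  have D2: "(\<sigma>/(1+\<sigma>))^k * \<Pi>2 \<le> \<Pi>0^2"
  proof -
    have "(\<sigma>/(1+\<sigma>))^k * \<Pi>2 = (\<Prod>i\<in>I. \<sigma>/(1+\<sigma>) * ((s i)^2 + s i))"
      unfolding \<Pi>2_def prod.distrib prod_constant cardI ..
    also have "\<dots> \<le> (\<Prod>i\<in>I. (s i)^2)"
    proof (rule prod_mono)
      fix i assume i: "i \<in> I"
      have si: "\<sigma> \<le> s i" using sge i by simp
      then have s0: "0 < s i" using \<sigma>pos by simp
      have "\<sigma> * ((s i)^2 + s i) \<le> (s i)^2 * (1 + \<sigma>)"
        using si s0 by (simp add: power2_eq_square algebra_simps mult_right_mono)
      then have "\<sigma>/(1+\<sigma>) * ((s i)^2 + s i) \<le> (s i)^2"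
        using \<sigma>pos by (simp add: field_simps)
      moreover have "0 \<le> \<sigma>/(1+\<sigma>) * ((s i)^2 + s i)" using \<sigma>pos s0 by simp
      ultimately show "0 \<le> \<sigma>/(1+\<sigma>) * ((s i)^2 + s i) \<and> \<sigma>/(1+\<sigma>) * ((s i)^2 + s i) \<le> (s i)^2" by simp
    qed
    also have "\<dots> = \<Pi>0^2" by (simp add: \<Pi>0_def prod_power_distrib)
    finally show ?thesis .
  qed
  have D3: "\<Pi>0^2 \<le> \<Pi>2"
  proof -
    have "\<Pi>0^2 = (\<Prod>i\<in>I. (s i)^2)" by (simp add: \<Pi>0_def prod_power_distrib)
    also have "\<dots> \<le> \<Pi>2" unfolding \<Pi>2_def
    proof (rule prod_mono)
      fix i assume i: "i \<in> I"
      then have "0 < s i" using sge \<sigma>pos by force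
      then show "0 \<le> (s i)^2 \<and> (s i)^2 \<le> (s i)^2 + s i" by simp
    qed
    finally show ?thesis .
  qed
  have stepE: "(\<Sum>x\<in>X. W x) \<ge> (\<Sum>x\<in>X. Z x) - (\<Sum>x\<in>X. Z x * Sm x) / (real m + 1)"
  proof -
    have pw: "Z x - Z x * Sm x / (real m + 1) \<le> W x" for x
    proof (cases "Sm x \<le> real m")
      case True
      then show ?thesis using Z0[of x] Sm0[of x] by (simp add: W_def)
    next
      case False
      then have "card {p\<in>Pm. f p x = -1} > m" by (simp add: Sm_def)
      then have "Sm x \<ge> real m + 1" by (simp add: Sm_def)
      then have "Z x * (real m + 1) \<le> Z x * Sm x" using Z0[of x] by (simp add: mult_left_mono)
      then have "Z x \<le> Z x * Sm x / (real m + 1)" by (simp add: field_simps)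
      then show ?thesis using False by (simp add: W_def)
    qed
    have "(\<Sum>x\<in>X. Z x) - (\<Sum>x\<in>X. Z x * Sm x) / (real m + 1) = (\<Sum>x\<in>X. Z x - Z x * Sm x / (real m + 1))"
      by (simp add: sum_subtractf sum_divide_distrib)
    also have "\<dots> \<le> (\<Sum>x\<in>X. W x)" by (rule sum_mono) (rule pw)
    finally show ?thesis .
  qed
  define G where "G = {x\<in>X. 0 < W x}"
  have stepF: "(\<Sum>x\<in>X. W x)^2 \<le> real (card G) * (\<Sum>x\<in>X. (Z x)^2)"
  proof -
    have W0: "0 \<le> W x" for x using Z0[of x] by (simp add: W_def)
    have WZ: "(W x)^2 \<le> (Z x)^2" for x using Z0[of x] by (simp add: W_def)
    have finG: "finite G" using finX by (simp add: G_def)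
    have "(\<Sum>x\<in>X. W x) = (\<Sum>x\<in>G. W x)"
    proof -
      have "(\<Sum>x\<in>G. W x) = (\<Sum>x\<in>X. if 0 < W x then W x else 0)" unfolding G_def
        using finX by (rule sum.inter_filter)
      also have "\<dots> = (\<Sum>x\<in>X. W x)" using W0 by (intro sum.cong) (auto simp: order_le_less)
      finally show ?thesis by simp
    qed
    also have "(\<Sum>x\<in>G. W x)^2 \<le> real (card G) * (\<Sum>x\<in>G. (W x)^2)" using finG by (rule sum_sq_le_card)
    also have "(\<Sum>x\<in>G. (W x)^2) \<le> (\<Sum>x\<in>G. (Z x)^2)" by (rule sum_mono) (rule WZ)
    also have "\<dots> \<le> (\<Sum>x\<in>X. (Z x)^2)" by (rule sum_mono2) (use finX G_def in auto)
    finally show ?thesis by (simp add: mult_left_mono)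
  qed
  have stepG: "G \<subseteq> {x\<in>X. T \<le> real_of_int (\<Sum>p\<in>{p. prime p \<and> f p x \<noteq> 0}. f p x)}"
  proof
    fix x assume xG: "x \<in> G"
    then have xX: "x \<in> X" and Wx: "0 < W x" by (auto simp: G_def)
    have Smx: "Sm x \<le> real m" and Zx: "0 < Z x" using Wx by (auto simp: W_def split: if_splits)
    have ex: "\<forall>i\<in>I. \<exists>p\<in>P i. f p x = 1"
    proof
      fix i assume i: "i \<in> I"
      have "Z x \<noteq> 0" using Zx by simp
      then have "real (card {p\<in>P i. f p x = 1}) \<noteq> 0" using i finI by (simp add: Z_def prod_zero_iff)
      then have "card {p\<in>P i. f p x = 1} \<noteq> 0" by simp
      then have "{p\<in>P i. f p x = 1} \<noteq> {}" by (metis card.empty)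
      then show "\<exists>p\<in>P i. f p x = 1" by auto
    qed
    then obtain g where g: "\<forall>i\<in>I. g i \<in> P i \<and> f (g i) x = 1" by metis
    have injg: "inj_on g I"
    proof (rule inj_onI)
      fix i j assume ij: "i \<in> I" "j \<in> I" "g i = g j"
      show "i = j"
      proof (rule ccontr)
        assume "i \<noteq> j"
        then have "P i \<inter> P j = {}" using PdisI ij by simp
        moreover have "g i \<in> P i" "g j \<in> P j" using g ij by auto
        ultimately show False using ij by auto
      qed
    qed
    define F where "F = {p. prime p \<and> f p x \<noteq> 0}"
    have finFx: "finite F" using finF xX by (simp add: F_def)
    define Fp where "Fp = {p\<in>F. f p x = 1}"
    define Fm where "Fm = {p\<in>F. f p x = -1}"
    have "g ` I \<subseteq> Fp" using g PprI by (auto simp: Fp_def F_def)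
    then have "card (g ` I) \<le> card Fp" using finFx by (intro card_mono) (auto simp: Fp_def)
    then have kFp: "k \<le> card Fp" using card_image[OF injg] cardI by simp
    have subFm: "Fm \<subseteq> {p\<in>Pm. f p x = -1} \<union> {p. prime p \<and> f p x \<noteq> 0 \<and> z' < real p}"
      by (auto simp: Fm_def F_def Pm_def)
    have "card Fm \<le> card ({p\<in>Pm. f p x = -1} \<union> {p. prime p \<and> f p x \<noteq> 0 \<and> z' < real p})"
    proof (rule card_mono)
      have "{p. prime p \<and> f p x \<noteq> 0 \<and> z' < real p} \<subseteq> F" by (auto simp: F_def)
      then have "finite {p. prime p \<and> f p x \<noteq> 0 \<and> z' < real p}" using finFx by (rule finite_subset)
      then show "finite ({p\<in>Pm. f p x = -1} \<union> {p. prime p \<and> f p x \<noteq> 0 \<and> z' < real p})" using finPm by simp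
    qed (rule subFm)
    also have "\<dots> \<le> card {p\<in>Pm. f p x = -1} + card {p. prime p \<and> f p x \<noteq> 0 \<and> z' < real p}"
      by (rule card_Un_le)
    finally have "real (card Fm) \<le> Sm x + real (card {p. prime p \<and> f p x \<noteq> 0 \<and> z' < real p})"
      unfolding Sm_def by linarith
    then have Fmb: "real (card Fm) \<le> real m + B0" using Smx large xX by fastforce
    have "real_of_int (\<Sum>p\<in>F. f p x) = (\<Sum>p\<in>F. real_of_int (f p x))" by simp
    also have "\<dots> = (\<Sum>p\<in>F. (if f p x = 1 then 1 else 0) - (if f p x = -1 then 1 else 0))"
    proof (rule sum.cong)
      fix p assume "p \<in> F"
      then have "f p x \<in> {-1, 1}" using fr xX by (auto simp: F_def)
      then show "real_of_int (f p x) = (if f p x = 1 then 1 else 0) - (if f p x = -1 then 1 else 0)" by auto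
    qed simp
    also have "\<dots> = real (card Fp) - real (card Fm)"
      using finFx by (simp add: sum_subtractf card_filter_sum Fp_def Fm_def)
    finally have "real_of_int (\<Sum>p\<in>F. f p x) = real (card Fp) - real (card Fm)" .
    moreover have "real k \<le> real (card Fp)" using kFp by simp
    ultimately have "T \<le> real_of_int (\<Sum>p\<in>F. f p x)" using kT Fmb by linarith
    then show "x \<in> {x\<in>X. T \<le> real_of_int (\<Sum>p\<in>{p. prime p \<and> f p x \<noteq> 0}. f p x)}"
      using xX by (simp add: F_def)
  qed
  have stepH: "n / 8 * (\<sigma>/(1+\<sigma>))^k \<le> real (card G)"
  proof (cases "n = 0")
    case True then show ?thesis by simp
  next
    case False
    then have npos: "n > 0" using n0 by simp
    have sk0: "0 < \<sigma>^k" using \<sigma>pos by simp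
    have sk1: "\<sigma>^k \<le> 1" using \<sigma>pos \<sigma>1 by (simp add: power_le_one)
    have sq: "\<sigma>^(2*k) = (\<sigma>^k)^2" by (simp add: power_mult mult.commute)
    have "(\<sigma>^k)^2 \<le> \<sigma>^k" using sk0 sk1 by (simp add: power2_eq_square mult_left_le)
    then have LE1: "L * E \<le> \<Pi>0 / 8" using LE sq D1 by linarith
    have "(\<sigma>^k)^2 \<le> \<Pi>0^2" using D1 sk0 by (simp add: power_mono)
    moreover have "0 \<le> (\<sigma>^k)^2" by simp
    ultimately have LE2: "L * E \<le> \<Pi>2" using LE sq D3 by linarith
    have P0pos: "0 < \<Pi>0" using D1 sk0 by linarith
    have "0 < \<Pi>0^2" using P0pos by simp
    then have P2pos: "0 < \<Pi>2" using D3 by linarith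
    have "1 \<le> z^(2*k)" using z1 by (simp add: one_le_power)
    then have "0 \<le> L" using zL2 by linarith
    then have LE0: "0 \<le> L * E" using E0 by simp
    have sM4: "sM / (real m + 1) \<le> 1/4" using sm by (simp add: sM_def Pm_def field_simps)
    show ?thesis
      by (rule final_arith[OF npos stepA stepB stepC stepE _ sM4 stepF LE0 LE1 LE2 D2 P0pos P2pos]) simp_all
  qed
  have "card G \<le> card {x\<in>X. T \<le> real_of_int (\<Sum>p\<in>{p. prime p \<and> f p x \<noteq> 0}. f p x)}"
    by (rule card_mono) (use finX stepG in auto)
  then have "real (card G) \<le> real (card {x\<in>X. T \<le> real_of_int (\<Sum>p\<in>{p. prime p \<and> f p x \<noteq> 0}. f p x)})"
    by (rule of_nat_mono)
  then show ?thesis using stepH unfolding n_def by linarith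
qed

theorem theorem5p3:
  fixes A :: "'a set" and h :: "'a \<Rightarrow> real"
    and f :: "nat \<Rightarrow> 'a \<Rightarrow> int"
    and \<xi> c\<^sub>p c\<^sub>m C M\<^sub>p M\<^sub>m :: real
    and \<eta>\<^sub>p \<eta>\<^sub>m :: "nat \<Rightarrow> real"
  assumes infA: "infinite A"
    and finAN: "\<And>N. finite (upto_height A h N)"
    and size: "\<exists>k1 k2. k1 > 0 \<and> k2 > 0 \<and> (\<forall>N::real. N \<ge> 2 \<longrightarrow>
               k1 * ln N \<le> ln (real (card (upto_height A h N))) \<and>
               ln (real (card (upto_height A h N))) \<le> k2 * ln N)"
    and frange: "\<And>p x. prime p \<Longrightarrow> x \<in> A \<Longrightarrow> f p x \<in> {-1, 0, 1}"
    and xi_pos: "\<xi> > 0"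
    and mult_p: "multiplicative \<eta>\<^sub>p" and mult_m: "multiplicative \<eta>\<^sub>m"
    and range_p: "\<And>n. n > 0 \<Longrightarrow> 0 \<le> \<eta>\<^sub>p n \<and> \<eta>\<^sub>p n \<le> 1"
    and range_m: "\<And>n. n > 0 \<Longrightarrow> 0 \<le> \<eta>\<^sub>m n \<and> \<eta>\<^sub>m n \<le> 1"
    and density: "\<exists>K. \<forall>N::real. \<forall>qm qp :: nat. N \<ge> 2 \<longrightarrow> qm > 0 \<longrightarrow> qp > 0 \<longrightarrow>
               squarefree qm \<longrightarrow> squarefree qp \<longrightarrow> coprime qm qp \<longrightarrow>
               real (qm * qp) \<le> N powr (\<xi> / 2) \<longrightarrow>
               \<bar>real (card {x \<in> upto_height A h N.
                        (\<forall>p. prime p \<longrightarrow> p dvd qm \<longrightarrow> f p x = -1) \<and>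
                        (\<forall>p. prime p \<longrightarrow> p dvd qp \<longrightarrow> f p x = 1)})
                   / real (card (upto_height A h N))
                 - \<eta>\<^sub>m qm * \<eta>\<^sub>p qp\<bar> \<le> K * N powr (- \<xi>)"
    and consts_pos: "c\<^sub>p > 0" "c\<^sub>m > 0" "C > 0"
    and eta_p_small: "\<exists>K. \<forall>p. prime p \<longrightarrow> \<eta>\<^sub>p p \<le> K / real p"
    and eta_m_small: "\<exists>K. \<forall>p. prime p \<longrightarrow> \<eta>\<^sub>m p \<le> K / real p"
    and mertens_p: "\<exists>K. \<forall>N::real. N \<ge> 2 \<longrightarrow>
               \<bar>(\<Sum>p\<in>{p. prime p \<and> real p \<le> N}. \<eta>\<^sub>p p) - (c\<^sub>p * ln (ln N) + M\<^sub>p)\<bar> \<le> K / ln N"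
    and mertens_m: "\<exists>K. \<forall>N::real. N \<ge> 2 \<longrightarrow>
               \<bar>(\<Sum>p\<in>{p. prime p \<and> real p \<le> N}. \<eta>\<^sub>m p) - (c\<^sub>m * ln (ln N) + M\<^sub>m)\<bar> \<le> K / ln N"
    and support: "\<exists>K. \<forall>N::real. \<forall>x. N \<ge> 2 \<longrightarrow> x \<in> upto_height A h N \<longrightarrow>
               finite {p. prime p \<and> f p x \<noteq> 0} \<and>
               real (\<Prod>p\<in>{p. prime p \<and> f p x \<noteq> 0}. p) \<le> K * N powr C"
  shows "\<forall>A\<^sub>0::real. A\<^sub>0 > 0 \<longrightarrow> (\<exists>\<delta>>0. \<exists>\<kappa>>0. \<exists>N\<^sub>0. \<forall>N::real. N \<ge> max 2 N\<^sub>0 \<longrightarrow>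
           real (card {x \<in> upto_height A h N.
                   real_of_int (\<Sum>p\<in>{p. prime p \<and> f p x \<noteq> 0}. f p x) \<ge> A\<^sub>0 * ln (ln N)})
           \<ge> \<kappa> * real (card (upto_height A h N)) * (ln N) powr (- \<delta>))"
proof (intro allI impI)
  fix A0 :: real assume A0: "A0 > 0"
  from density obtain Kd0 where Kd0: "\<forall>N::real. \<forall>qm qp :: nat. N \<ge> 2 \<longrightarrow> qm > 0 \<longrightarrow> qp > 0 \<longrightarrow>
               squarefree qm \<longrightarrow> squarefree qp \<longrightarrow> coprime qm qp \<longrightarrow>
               real (qm * qp) \<le> N powr (\<xi> / 2) \<longrightarrow>
               \<bar>real (card {x \<in> upto_height A h N.
                        (\<forall>p. prime p \<longrightarrow> p dvd qm \<longrightarrow> f p x = -1) \<and>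
                        (\<forall>p. prime p \<longrightarrow> p dvd qp \<longrightarrow> f p x = 1)})
                   / real (card (upto_height A h N))
                 - \<eta>\<^sub>m qm * \<eta>\<^sub>p qp\<bar> \<le> Kd0 * N powr (- \<xi>)" by blast
  note Kd0' = Kd0[rule_format]
  from mertens_p obtain Kp where Kp: "\<forall>N::real. N \<ge> 2 \<longrightarrow>
               \<bar>(\<Sum>p\<in>{p. prime p \<and> real p \<le> N}. \<eta>\<^sub>p p) - (c\<^sub>p * ln (ln N) + M\<^sub>p)\<bar> \<le> Kp / ln N" by blast
  from mertens_m obtain Km where Km: "\<forall>N::real. N \<ge> 2 \<longrightarrow>
               \<bar>(\<Sum>p\<in>{p. prime p \<and> real p \<le> N}. \<eta>\<^sub>m p) - (c\<^sub>m * ln (ln N) + M\<^sub>m)\<bar> \<le> Km / ln N" by blast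
  from support obtain Ks where Ks: "\<forall>N::real. \<forall>x. N \<ge> 2 \<longrightarrow> x \<in> upto_height A h N \<longrightarrow>
               finite {p. prime p \<and> f p x \<noteq> 0} \<and>
               real (\<Prod>p\<in>{p. prime p \<and> f p x \<noteq> 0}. p) \<le> Ks * N powr C" by blast
  define Kd where "Kd = \<bar>Kd0\<bar>"
  define \<epsilon> where "\<epsilon> = min \<xi> 1"
  have \<epsilon>0: "0 < \<epsilon>" "\<epsilon> \<le> 1" "\<epsilon> \<le> \<xi>" using xi_pos by (auto simp: \<epsilon>_def)
  define Mm where "Mm = \<bar>M\<^sub>m\<bar> + \<bar>Km\<bar>"
  define B0 where "B0 = 4 * C / \<epsilon> + 1"
  define a where "a = A0 + 4 * c\<^sub>m + 1"
  define D where "D = 1 / (2 * a)"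
  define \<sigma> where "\<sigma> = min 1 (c\<^sub>p * D / 2)"
  define T0 where "T0 = ln (1 + 4 * \<bar>Kp\<bar> / (c\<^sub>p * D))"
  define t where "t = (\<lambda>i::nat. exp (exp (T0 + D * real i)))"
  define \<beta> where "\<beta> = 2 * a * ln (1 / \<sigma>)"
  define \<delta> where "\<delta> = a * ln ((1 + \<sigma>) / \<sigma>)"
  define U0 where "U0 = max (max (max 8 (4 / \<epsilon>)) (max (exp (4 * Mm + B0 + 3)) ((16 * a * exp T0 / \<epsilon>)^4)))
     (max ((16 * \<beta> / \<epsilon> + 1)^4) (max (32 * Kd / \<epsilon>) (4 * \<bar>ln Ks\<bar> / \<epsilon>)))"
  have a1: "a > 1" using A0 consts_pos by (simp add: a_def)
  have D0: "D > 0" using a1 by (simp add: D_def)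
  have \<sigma>0: "0 < \<sigma>" "\<sigma> \<le> 1" using consts_pos D0 by (auto simp: \<sigma>_def)
  have \<delta>0: "\<delta> > 0"
  proof -
    have "1 < (1 + \<sigma>) / \<sigma>" using \<sigma>0 by (simp add: field_simps)
    then show ?thesis using a1 by (simp add: \<delta>_def)
  qed
  have main: "\<forall>N. N \<ge> max 2 (exp U0) \<longrightarrow>
           real (card {x \<in> upto_height A h N.
                   real_of_int (\<Sum>p\<in>{p. prime p \<and> f p x \<noteq> 0}. f p x) \<ge> A0 * ln (ln N)})
           \<ge> 1/8 * real (card (upto_height A h N)) * (ln N) powr (- \<delta>)"
  proof (intro allI impI)
    fix N :: real assume N: "N \<ge> max 2 (exp U0)"
    define X where "X = upto_height A h N"
    have N2: "N \<ge> 2" using N by simp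
    have Npos: "N > 0" using N2 by simp
    define u where "u = ln N"
    have uU0: "u \<ge> U0"
    proof -
      have "exp U0 \<le> N" using N by simp
      then have "ln (exp U0) \<le> ln N" using Npos by (subst ln_le_cancel_iff) auto
      then show ?thesis by (simp add: u_def)
    qed
    have u3: "u \<ge> 8" using uU0 by (simp add: U0_def)
    have upos: "u > 0" using u3 by simp
    define ll where "ll = ln u"
    have ll1: "ll > 1"
    proof -
      have "exp 1 \<le> (3::real)" using exp_le by simp
      then have "exp 1 < u" using u3 by simp
      then have "ln (exp 1) < ln u" using upos by (subst ln_less_cancel_iff) auto
      then show ?thesis by (simp add: ll_def)
    qed
    have F1: "\<epsilon> * u / 4 \<ge> 1"
    proof -
      have "4 / \<epsilon> \<le> u" using uU0 by (simp add: U0_def)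
      then show ?thesis using \<epsilon>0 by (simp add: field_simps)
    qed
    have F2: "ll \<ge> 4 * Mm + B0 + 3"
    proof -
      have "exp (4 * Mm + B0 + 3) \<le> u" using uU0 by (simp add: U0_def)
      then show ?thesis using upos by (simp add: ll_def ln_ge_iff)
    qed
    define v where "v = u powr (1/4)"
    have vpos: "v > 0" using upos by (simp add: v_def)
    have v4: "v^4 = u"
    proof -
      have "v^4 = v powr (real 4)" using vpos by (simp add: powr_realpow)
      also have "\<dots> = u" using upos by (simp add: v_def powr_powr)
      finally show ?thesis .
    qed
    have lnv: "ll = 4 * ln v" using upos by (simp add: ll_def v_def)
    have F3: "ll \<le> 4 * v" using ln_le_minus_one[OF vpos] lnv by simp
    have root4: "y \<le> v" if "0 \<le> y" "y^4 \<le> u" for y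
    proof (rule ccontr)
      assume "\<not> y \<le> v"
      then have "v < y" by simp
      then have "v^4 < y^4" using vpos by (intro power_strict_mono) auto
      then show False using that v4 by simp
    qed
    have \<beta>0: "0 \<le> \<beta>"
    proof -
      have "1 \<le> 1 / \<sigma>" using \<sigma>0 by (simp add: field_simps)
      then show ?thesis using a1 by (simp add: \<beta>_def)
    qed
    have F4: "v \<ge> 16 * a * exp T0 / \<epsilon>"
      by (rule root4) (use a1 \<epsilon>0 uU0 in \<open>auto simp: U0_def\<close>)
    have F5: "v \<ge> 16 * \<beta> / \<epsilon> + 1"
      by (rule root4) (use \<beta>0 \<epsilon>0 uU0 in \<open>auto simp: U0_def\<close>)
    have F6: "u \<ge> 32 * Kd / \<epsilon>" using uU0 by (simp add: U0_def)
    have F7: "u \<ge> 4 * \<bar>ln Ks\<bar> / \<epsilon>" using uU0 by (simp add: U0_def)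
    define m where "m = nat \<lceil>4 * (c\<^sub>m * ll + Mm)\<rceil>"
    define k where "k = nat \<lceil>A0 * ll + real m + B0\<rceil>"
    have Mm0: "0 \<le> Mm" by (simp add: Mm_def)
    have B00: "0 < B0"
    proof -
      have "0 \<le> 4 * C / \<epsilon>" using consts_pos \<epsilon>0 by simp
      then show ?thesis by (simp add: B0_def)
    qed
    have x0: "0 \<le> 4 * (c\<^sub>m * ll + Mm)" using consts_pos ll1 Mm0 by simp
    have F8: "4 * (c\<^sub>m * ll + Mm) \<le> real m" "real m \<le> 4 * (c\<^sub>m * ll + Mm) + 1"
    proof -
      have "real m = of_int \<lceil>4 * (c\<^sub>m * ll + Mm)\<rceil>" using x0 by (simp add: m_def)
      then show "4 * (c\<^sub>m * ll + Mm) \<le> real m" "real m \<le> 4 * (c\<^sub>m * ll + Mm) + 1"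
        using le_of_int_ceiling[of "4 * (c\<^sub>m * ll + Mm)"] of_int_ceiling_le_add_one[of "4 * (c\<^sub>m * ll + Mm)"] by linarith+
    qed
    have y0: "0 \<le> A0 * ll + real m + B0" using A0 ll1 B00 by simp
    have F9: "A0 * ll + real m + B0 \<le> real k" "real k \<le> A0 * ll + real m + B0 + 1"
    proof -
      have "real k = of_int \<lceil>A0 * ll + real m + B0\<rceil>" using y0 by (simp add: k_def)
      then show "A0 * ll + real m + B0 \<le> real k" "real k \<le> A0 * ll + real m + B0 + 1"
        using le_of_int_ceiling[of "A0 * ll + real m + B0"] of_int_ceiling_le_add_one[of "A0 * ll + real m + B0"] by linarith+
    qed
    have F10: "real k \<le> a * ll"
    proof -
      have "a * ll = A0 * ll + 4 * (c\<^sub>m * ll) + ll" by (simp add: a_def algebra_simps)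
      moreover have "4 * (c\<^sub>m * ll + Mm) = 4 * (c\<^sub>m * ll) + 4 * Mm" by (simp add: algebra_simps)
      ultimately show ?thesis using F2 F8 F9 by linarith
    qed
    have Da: "D * a = 1/2" using a1 by (simp add: D_def)
    have F11: "real k * exp (T0 + D * real k) \<le> \<epsilon> * u / 4"
    proof -
      have "D * real k \<le> D * (a * ll)" using F10 D0 by (simp add: mult_left_mono)
      also have "\<dots> = ll / 2" using Da by (simp add: algebra_simps)
      also have "\<dots> = real 2 * ln v" using lnv by simp
      finally have "exp (D * real k) \<le> exp (real 2 * ln v)" by simp
      also have "\<dots> = v^2" using vpos by (simp only: exp_of_nat_mult exp_ln)
      finally have ev: "exp (D * real k) \<le> v^2" .
      have "real k * exp (T0 + D * real k) = real k * (exp T0 * exp (D * real k))" by (simp add: exp_add)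
      also have "\<dots> \<le> (a * ll) * (exp T0 * v^2)"
        using F10 ev by (intro mult_mono) auto
      also have "\<dots> \<le> (a * (4 * v)) * (exp T0 * v^2)"
        using F3 a1 vpos ll1 by (intro mult_mono) auto
      also have "\<dots> = 4 * v^3 * (a * exp T0)" by (simp add: power2_eq_square power3_eq_cube)
      also have "\<dots> \<le> 4 * v^3 * (\<epsilon> * v / 16)"
      proof -
        have "a * exp T0 \<le> \<epsilon> * v / 16" using F4 \<epsilon>0 by (simp add: field_simps)
        then show ?thesis using vpos by (intro mult_left_mono) auto
      qed
      also have "\<dots> = \<epsilon> * v^4 / 4" by (simp add: power_numeral_reduce power3_eq_cube)
      finally show ?thesis using v4 by simp
    qed
    define z where "z = t k"
    define z' where "z' = N powr (\<epsilon> / 4)"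
    define L where "L = N powr (\<epsilon> / 2)"
    define E where "E = Kd * N powr (- \<epsilon>)"
    have z1: "1 \<le> z" by (simp add: z_def t_def)
    have z'eq: "z' = exp (\<epsilon> * u / 4)" using Npos by (simp add: z'_def powr_def u_def mult.commute)
    have z'1: "1 \<le> z'" using z'eq \<epsilon>0 upos by simp
    have zk: "z^k \<le> z'"
    proof -
      have "z^k = exp (real k * exp (T0 + D * real k))" by (simp add: z_def t_def exp_of_nat_mult)
      also have "\<dots> \<le> exp (\<epsilon> * u / 4)" using F11 by simp
      finally show ?thesis using z'eq by simp
    qed
    have Leq: "L = z' * z'" using Npos by (simp add: L_def z'_def powr_add[symmetric])
    have zL1: "z^k * z' \<le> L" using zk z'1 Leq by (simp add: mult_right_mono)
    have zL2: "z^(2*k) \<le> L"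
    proof -
      have "z^(2*k) = z^k * z^k" by (simp add: power_add[symmetric] mult_2)
      also have "\<dots> \<le> z' * z'" using zk z1 z'1 by (intro mult_mono) auto
      finally show ?thesis using Leq by simp
    qed
    have E0: "0 \<le> E" by (simp add: E_def Kd_def)
    have LE: "L * E \<le> \<sigma>^(2*k) / 8"
    proof -
      have LEeq: "L * E = Kd * exp (- (\<epsilon> * u / 2))"
        using Npos by (simp add: L_def E_def powr_def u_def exp_add[symmetric] algebra_simps)
      have ls: "ln \<sigma> \<le> 0" using \<sigma>0 by simp
      have \<beta>eq: "\<beta> = - 2 * a * ln \<sigma>" using \<sigma>0 by (simp add: \<beta>_def ln_div)
      have "\<sigma>^(2*k) = exp (real (2*k) * ln \<sigma>)" using \<sigma>0 by (simp only: exp_of_nat_mult exp_ln)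
      also have "real (2*k) * ln \<sigma> \<ge> (2 * (a * ll)) * ln \<sigma>"
        using F10 ls by (intro mult_right_mono_neg) auto
      then have "exp ((2 * (a * ll)) * ln \<sigma>) \<le> exp (real (2*k) * ln \<sigma>)" by simp
      moreover have "(2 * (a * ll)) * ln \<sigma> = - (\<beta> * ll)" using \<beta>eq by simp
      ultimately have s1: "exp (- (\<beta> * ll)) \<le> \<sigma>^(2*k)"
        using \<open>\<sigma>^(2*k) = exp (real (2*k) * ln \<sigma>)\<close> by simp
      have "\<beta> * ll \<le> \<beta> * (4 * v)" using F3 \<beta>0 by (simp add: mult_left_mono)
      also have "\<dots> \<le> \<epsilon> * u / 4"
      proof -
        have v1: "1 \<le> v" using F5 \<beta>0 \<epsilon>0 by (smt (verit) divide_nonneg_pos)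
        have "v \<le> v^3" using v1 by (simp add: power3_eq_cube) (smt (verit) mult_le_cancel_left1 one_le_power power2_eq_square mult.assoc)
        then have "16 * \<beta> / \<epsilon> \<le> v^3" using F5 by linarith
        then have "16 * \<beta> \<le> \<epsilon> * v^3" using \<epsilon>0 by (simp add: field_simps)
        then have "4 * v * (16 * \<beta>) \<le> 4 * v * (\<epsilon> * v^3)" using vpos by (intro mult_left_mono) auto
        moreover have vu: "v * v^3 = u" using v4 by (simp add: eval_nat_numeral)
        moreover have "4 * v * (\<epsilon> * v^3) = 4 * \<epsilon> * (v * v^3)" by (simp add: algebra_simps)
        moreover have "4 * \<epsilon> * (v * v^3) = 4 * \<epsilon> * u" by (simp only: vu)
        moreover have "\<beta> * (4 * v) * 16 = 4 * v * (16 * \<beta>)" by (simp add: algebra_simps)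
        ultimately have "\<beta> * (4 * v) * 16 \<le> 4 * \<epsilon> * u" by linarith
        then show ?thesis by simp
      qed
      finally have s2: "exp (- (\<epsilon> * u / 4)) \<le> exp (- (\<beta> * ll))" by simp
      have "8 * Kd \<le> exp (\<epsilon> * u / 4)"
      proof -
        have "8 * Kd \<le> \<epsilon> * u / 4" using F6 \<epsilon>0 by (simp add: field_simps)
        also have "\<dots> \<le> 1 + \<epsilon> * u / 4" by simp
        also have "\<dots> \<le> exp (\<epsilon> * u / 4)" by (rule exp_ge_add_one_self)
        finally show ?thesis .
      qed
      then have "8 * Kd * exp (- (\<epsilon> * u / 2)) \<le> exp (\<epsilon> * u / 4) * exp (- (\<epsilon> * u / 2))"
        by (simp add: mult_right_mono)
      also have "\<dots> = exp (- (\<epsilon> * u / 4))" by (simp add: exp_add[symmetric])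
      finally have s3: "8 * Kd * exp (- (\<epsilon> * u / 2)) \<le> exp (- (\<epsilon> * u / 4))" .
      have c1: "8 * (L * E) = 8 * Kd * exp (- (\<epsilon> * u / 2))" using LEeq by simp
      have "8 * (L * E) \<le> \<sigma>^(2*k)" using c1 s1 s2 s3 by linarith
      then show ?thesis by simp
    qed
    have sm: "(\<Sum>p\<in>{p. prime p \<and> real p \<le> z'}. \<eta>\<^sub>m p) * 4 \<le> real m + 1"
    proof -
      have lz: "ln z' = \<epsilon> * u / 4" using z'eq by simp
      have "2 \<le> 1 + (1::real)" by simp
      also have "\<dots> \<le> exp 1" using exp_ge_add_one_self[of 1] by simp
      also have "\<dots> \<le> z'" using z'eq F1 by simp
      finally have z'2: "2 \<le> z'" .
      have hm: "\<bar>(\<Sum>p\<in>{p. prime p \<and> real p \<le> z'}. \<eta>\<^sub>m p) - (c\<^sub>m * ln (ln z') + M\<^sub>m)\<bar> \<le> Km / ln z'"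
        using Km z'2 by blast
      have "ln (ln z') \<le> ll"
      proof -
        have "\<epsilon> * u / 4 \<le> u" using \<epsilon>0 upos by simp
        then have "ln (\<epsilon> * u / 4) \<le> ln u" using F1 by (subst ln_le_cancel_iff) auto
        then show ?thesis unfolding lz ll_def .
      qed
      then have t1: "c\<^sub>m * ln (ln z') \<le> c\<^sub>m * ll" using consts_pos by (simp add: mult_left_mono)
      have t2: "Km / ln z' \<le> \<bar>Km\<bar>"
      proof -
        have "Km / ln z' \<le> \<bar>Km\<bar> / ln z'" using F1 lz by (simp add: divide_right_mono)
        also have "\<dots> \<le> \<bar>Km\<bar> / 1" using F1 lz by (intro divide_left_mono) auto
        finally show ?thesis by simp
      qed
      have "(\<Sum>p\<in>{p. prime p \<and> real p \<le> z'}. \<eta>\<^sub>m p) \<le> c\<^sub>m * ll + Mm"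
        using hm t1 t2 by (simp add: Mm_def abs_le_iff) linarith
      moreover have "4 * (c\<^sub>m * ll + Mm) = 4 * (c\<^sub>m * ll) + 4 * Mm" by (simp add: algebra_simps)
      ultimately show ?thesis using F8 by linarith
    qed
    have finX: "finite X" using finAN by (simp add: X_def)
    have fr: "\<forall>x\<in>X. \<forall>p. prime p \<longrightarrow> f p x \<in> {-1,0,1}" using frange by (auto simp: X_def upto_height_def)
    have finF: "\<forall>x\<in>X. finite {p. prime p \<and> f p x \<noteq> 0}" using Ks N2 by (simp add: X_def)
    have large: "\<forall>x\<in>X. real (card {p. prime p \<and> f p x \<noteq> 0 \<and> z' < real p}) \<le> B0"
    proof
      fix x assume xX: "x \<in> X"
      define F where "F = {p. prime p \<and> f p x \<noteq> 0}"
      define G where "G = {p. prime p \<and> f p x \<noteq> 0 \<and> z' < real p}"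
      have finF': "finite F" and prodF: "real (\<Prod>F) \<le> Ks * N powr C"
        using Ks N2 xX by (auto simp: F_def X_def)
      have GF: "G \<subseteq> F" by (auto simp: F_def G_def)
      have "\<Prod>F > 0" using finF' by (rule prodQ_pos) (auto simp: F_def)
      moreover have "\<Prod>G dvd \<Prod>F" using finF' GF by (rule prod_dvd_prod_subset)
      ultimately have "\<Prod>G \<le> \<Prod>F" by (rule dvd_imp_le[rotated])
      then have GleF: "real (\<Prod>G) \<le> real (\<Prod>F)" by (rule of_nat_mono)
      have "z' ^ card G = (\<Prod>p\<in>G. z')" by simp
      also have "\<dots> \<le> (\<Prod>p\<in>G. real p)"
        by (rule prod_mono) (use z'1 in \<open>auto simp: G_def\<close>)
      also have "\<dots> = real (\<Prod>G)" by simp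
      finally have "z' ^ card G \<le> Ks * N powr C" using GleF prodF by linarith
      moreover have zpos: "0 < z' ^ card G" using z'1 by simp
      ultimately have Kspos: "0 < Ks * N powr C" by linarith
      then have Ks0: "0 < Ks" using Npos by (simp add: zero_less_mult_iff)
      have "ln (z' ^ card G) \<le> ln (Ks * N powr C)"
        using \<open>z' ^ card G \<le> Ks * N powr C\<close> zpos by (subst ln_le_cancel_iff) auto
      then have "real (card G) * (\<epsilon> * u / 4) \<le> ln Ks + C * u"
        using z'eq Ks0 Npos by (simp add: ln_realpow ln_mult u_def)
      also have "\<dots> \<le> \<epsilon> * u / 4 + C * u"
      proof -
        have "4 * \<bar>ln Ks\<bar> \<le> \<epsilon> * u" using F7 \<epsilon>0 by (simp add: field_simps)
        then show ?thesis by linarith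
      qed
      also have "\<dots> = (1 + 4 * C / \<epsilon>) * (\<epsilon> * u / 4)" using \<epsilon>0 by (simp add: field_simps)
      finally have "real (card G) \<le> 1 + 4 * C / \<epsilon>" using \<epsilon>0 upos by (simp add: mult_le_cancel_right)
      then show "real (card {p. prime p \<and> f p x \<noteq> 0 \<and> z' < real p}) \<le> B0"
        by (simp add: G_def B0_def)
    qed
    have rp: "\<forall>p. prime p \<longrightarrow> 0 \<le> \<eta>\<^sub>p p" using range_p prime_gt_0_nat by blast
    have rm: "\<forall>p. prime p \<longrightarrow> 0 \<le> \<eta>\<^sub>m p" using range_m prime_gt_0_nat by blast
    have densN: "\<forall>Qm Qp. finite Qm \<longrightarrow> finite Qp \<longrightarrow> (\<forall>q\<in>Qm\<union>Qp. prime q) \<longrightarrow> Qm \<inter> Qp = {} \<longrightarrow> real (\<Prod>Qm * \<Prod>Qp) \<le> L \<longrightarrow>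
        \<bar>real (card {x\<in>X. (\<forall>p\<in>Qm. f p x = -1) \<and> (\<forall>p\<in>Qp. f p x = 1)}) - real (card X) * ((\<Prod>p\<in>Qm. \<eta>\<^sub>m p) * (\<Prod>p\<in>Qp. \<eta>\<^sub>p p))\<bar> \<le> real (card X) * E"
    proof (intro allI impI)
      fix Qm Qp :: "nat set"
      assume h1: "finite Qm" and h2: "finite Qp" and h3: "\<forall>q\<in>Qm\<union>Qp. prime q" and h4: "Qm \<inter> Qp = {}"
        and h5: "real (\<Prod>Qm * \<Prod>Qp) \<le> L"
      have D1: "\<forall>qm qp::nat. qm>0 \<longrightarrow> qp>0 \<longrightarrow> squarefree qm \<longrightarrow> squarefree qp \<longrightarrow> coprime qm qp \<longrightarrow> real (qm*qp) \<le> N powr (\<xi>/2) \<longrightarrow>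
         \<bar>real (card {x\<in>X. (\<forall>p. prime p \<longrightarrow> p dvd qm \<longrightarrow> f p x = -1) \<and> (\<forall>p. prime p \<longrightarrow> p dvd qp \<longrightarrow> f p x = 1)}) / real (card X) - \<eta>\<^sub>m qm * \<eta>\<^sub>p qp\<bar> \<le> Kd0 * N powr (- \<xi>)"
        unfolding X_def by (intro allI impI) (rule Kd0'[OF N2]; assumption)
      have "L \<le> N powr (\<xi>/2)" unfolding L_def using \<epsilon>0 N2 by (intro powr_mono) auto
      then have h5': "real (\<Prod>Qm * \<Prod>Qp) \<le> N powr (\<xi>/2)" using h5 by linarith
      have "\<bar>real (card {x\<in>X. (\<forall>p\<in>Qm. f p x = -1) \<and> (\<forall>p\<in>Qp. f p x = 1)}) - real (card X) * ((\<Prod>p\<in>Qm. \<eta>\<^sub>m p) * (\<Prod>p\<in>Qp. \<eta>\<^sub>p p))\<bar> \<le> real (card X) * (Kd0 * N powr (- \<xi>))"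
        by (rule dens_set[OF D1 mult_m mult_p h1 h2 h3 h4 h5' finX])
      also have "\<dots> \<le> real (card X) * E"
      proof -
        have "N powr (- \<xi>) \<le> N powr (- \<epsilon>)" using \<epsilon>0 N2 by (intro powr_mono) auto
        then have "Kd0 * N powr (- \<xi>) \<le> Kd * N powr (- \<epsilon>)"
          unfolding Kd_def by (smt (verit) abs_ge_self abs_ge_zero mult_mono powr_ge_zero)
        then show ?thesis by (simp add: E_def mult_left_mono)
      qed
      finally show "\<bar>real (card {x\<in>X. (\<forall>p\<in>Qm. f p x = -1) \<and> (\<forall>p\<in>Qp. f p x = 1)}) - real (card X) * ((\<Prod>p\<in>Qm. \<eta>\<^sub>m p) * (\<Prod>p\<in>Qp. \<eta>\<^sub>p p))\<bar> \<le> real (card X) * E" .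
    qed
    define P where "P = (\<lambda>i. {p. prime p \<and> t i < real p \<and> real p \<le> t (Suc i)})"
    have tmono: "t i \<le> t j" if "i \<le> j" for i j
      using that D0 by (simp add: t_def mult_left_mono)
    have t2: "2 \<le> t i" for i
    proof -
      have T00: "0 \<le> T0"
      proof -
        have "0 \<le> 4 * \<bar>Kp\<bar> / (c\<^sub>p * D)" using consts_pos D0 by simp
        then show ?thesis by (simp add: T0_def)
      qed
      have "1 \<le> exp (T0 + D * real i)" using T00 D0 by simp
      then have "exp 1 \<le> t i" by (simp add: t_def)
      moreover have "2 \<le> exp (1::real)" using exp_ge_add_one_self[of 1] by simp
      ultimately show ?thesis by linarith
    qed
    have Pfin: "\<forall>i<k. finite (P i)"
    proof (intro allI impI)
      fix i
      have "P i \<subseteq> {..nat \<lfloor>t (Suc i)\<rfloor>}" by (auto simp: P_def le_nat_floor)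
      then show "finite (P i)" by (rule finite_subset) simp
    qed
    have Ppr: "\<forall>i<k. \<forall>p\<in>P i. prime p \<and> real p \<le> z"
    proof (intro allI impI ballI)
      fix i p assume i: "i < k" and p: "p \<in> P i"
      have "t (Suc i) \<le> t k" using i by (intro tmono) simp
      then show "prime p \<and> real p \<le> z" using p by (auto simp: P_def z_def)
    qed
    have Pdis0: "P i \<inter> P j = {}" if "i < j" for i j
    proof -
      have "t (Suc i) \<le> t j" using that by (intro tmono) simp
      then show ?thesis by (auto simp: P_def)
    qed
    have Pdis: "\<forall>i<k. \<forall>j<k. i \<noteq> j \<longrightarrow> P i \<inter> P j = {}"
    proof (intro allI impI)
      fix i j assume "i < k" "j < k" "i \<noteq> j"
      then consider "i < j" | "j < i" by linarith
      then show "P i \<inter> P j = {}" using Pdis0 by cases (auto simp: Int_commute)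
    qed
    have Pmass: "\<forall>i<k. \<sigma> \<le> (\<Sum>p\<in>P i. \<eta>\<^sub>p p)"
    proof (intro allI impI)
      fix i assume "i < k"
      define S where "S = (\<lambda>y. \<Sum>p\<in>{p. prime p \<and> real p \<le> y}. \<eta>\<^sub>p p)"
      define R where "R = 1 + 4 * \<bar>Kp\<bar> / (c\<^sub>p * D)"
      have R1: "1 \<le> R" using consts_pos D0 by (simp add: R_def)
      have lnt: "ln (t j) = exp (T0 + D * real j)" for j by (simp add: t_def)
      have llnt: "ln (ln (t j)) = T0 + D * real j" for j by (simp add: lnt)
      have lntR: "R \<le> ln (t j)" for j
      proof -
        have "exp T0 \<le> exp (T0 + D * real j)" using D0 by simp
        moreover have "exp T0 = R" using R1 by (simp add: T0_def R_def)
        ultimately show ?thesis by (simp add: lnt)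
      qed
      have err: "\<bar>Kp\<bar> / ln (t j) \<le> c\<^sub>p * D / 4" for j
      proof -
        have Rpos: "0 < R" using R1 by simp
        have "\<bar>Kp\<bar> / ln (t j) \<le> \<bar>Kp\<bar> / R" using lntR[of j] Rpos by (intro divide_left_mono) auto
        also have "\<dots> \<le> c\<^sub>p * D / 4"
        proof -
          have "4 * \<bar>Kp\<bar> \<le> c\<^sub>p * D * R" using consts_pos D0 by (simp add: R_def field_simps)
          then show ?thesis using Rpos by (simp add: field_simps)
        qed
        finally show ?thesis .
      qed
      have fin1: "finite {p. prime p \<and> real p \<le> y}" for y :: real
      proof -
        have "{p. prime p \<and> real p \<le> y} \<subseteq> {..nat \<lfloor>y\<rfloor>}" by (auto simp: le_nat_floor)
        then show ?thesis by (rule finite_subset) simp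
      qed
      have Peq: "P i = {p. prime p \<and> real p \<le> t (Suc i)} - {p. prime p \<and> real p \<le> t i}"
        by (auto simp: P_def)
      have sub: "{p. prime p \<and> real p \<le> t i} \<subseteq> {p. prime p \<and> real p \<le> t (Suc i)}"
        using tmono[of i "Suc i"] by auto
      have sd: "(\<Sum>p\<in>P i. \<eta>\<^sub>p p) = S (t (Suc i)) - S (t i)"
        unfolding Peq S_def by (rule sum_diff[OF fin1 sub])
      have mert: "\<bar>S (t j) - (c\<^sub>p * (T0 + D * real j) + M\<^sub>p)\<bar> \<le> \<bar>Kp\<bar> / ln (t j)" for j
      proof -
        have "\<bar>S (t j) - (c\<^sub>p * ln (ln (t j)) + M\<^sub>p)\<bar> \<le> Kp / ln (t j)"
          unfolding S_def using Kp t2 by blast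
        moreover have "Kp / ln (t j) \<le> \<bar>Kp\<bar> / ln (t j)"
          using lntR[of j] R1 by (intro divide_right_mono) auto
        ultimately show ?thesis by (simp add: llnt)
      qed
      have m1: "S (t (Suc i)) \<ge> c\<^sub>p * (T0 + D * real (Suc i)) + M\<^sub>p - c\<^sub>p * D / 4"
        using mert[of "Suc i"] err[of "Suc i"] unfolding abs_le_iff by linarith
      have m2: "S (t i) \<le> c\<^sub>p * (T0 + D * real i) + M\<^sub>p + c\<^sub>p * D / 4"
        using mert[of i] err[of i] unfolding abs_le_iff by linarith
      have "(\<Sum>p\<in>P i. \<eta>\<^sub>p p) \<ge> c\<^sub>p * (T0 + D * real (Suc i)) - c\<^sub>p * (T0 + D * real i) - c\<^sub>p * D / 2"
        using sd m1 m2 by linarith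
      moreover have "c\<^sub>p * (T0 + D * real (Suc i)) - c\<^sub>p * (T0 + D * real i) = c\<^sub>p * D"
        by (simp add: algebra_simps)
      moreover have "\<sigma> \<le> c\<^sub>p * D / 2" by (simp add: \<sigma>_def)
      ultimately show "\<sigma> \<le> (\<Sum>p\<in>P i. \<eta>\<^sub>p p)" by linarith
    qed
    have kT: "A0 * ll + real m + B0 \<le> real k" using F9 by simp
    have core_res: "real (card X) / 8 * (\<sigma>/(1+\<sigma>))^k \<le> real (card {x\<in>X. A0 * ll \<le> real_of_int (\<Sum>p\<in>{p. prime p \<and> f p x \<noteq> 0}. f p x)})"
      by (rule core[OF finX fr finF densN rp rm Pfin Ppr Pdis Pmass \<sigma>0 z1 z'1 zL1 zL2 E0 LE sm large kT])
    have fin_pow: "(ln N) powr (- \<delta>) \<le> (\<sigma>/(1+\<sigma>))^k"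
    proof -
      have q0: "0 < \<sigma>/(1+\<sigma>)" using \<sigma>0 by simp
      have lq: "ln (\<sigma>/(1+\<sigma>)) = - ln ((1+\<sigma>)/\<sigma>)" using \<sigma>0 by (simp add: ln_div)
      have lq0: "ln (\<sigma>/(1+\<sigma>)) \<le> 0" using \<sigma>0 by simp
      have "(ln N) powr (- \<delta>) = exp (- \<delta> * ll)" using upos by (simp add: powr_def u_def ll_def)
      also have "- \<delta> * ll = (a * ll) * ln (\<sigma>/(1+\<sigma>))" by (simp add: \<delta>_def lq)
      also have "exp ((a * ll) * ln (\<sigma>/(1+\<sigma>))) \<le> exp (real k * ln (\<sigma>/(1+\<sigma>)))"
        using F10 lq0 by (simp add: mult_right_mono_neg)
      also have "\<dots> = (\<sigma>/(1+\<sigma>))^k" using q0 by (simp only: exp_of_nat_mult exp_ln)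
      finally show ?thesis .
    qed
    have "1/8 * real (card X) * (ln N) powr (- \<delta>) \<le> real (card X) / 8 * (\<sigma>/(1+\<sigma>))^k"
      using fin_pow by (simp add: mult_left_mono)
    also note core_res
    finally show "real (card {x \<in> upto_height A h N.
                   real_of_int (\<Sum>p\<in>{p. prime p \<and> f p x \<noteq> 0}. f p x) \<ge> A0 * ln (ln N)})
           \<ge> 1/8 * real (card (upto_height A h N)) * (ln N) powr (- \<delta>)"
      by (simp add: X_def ll_def u_def)
  qed
  show "\<exists>\<delta>>0. \<exists>\<kappa>>0. \<exists>N\<^sub>0. \<forall>N::real. N \<ge> max 2 N\<^sub>0 \<longrightarrow>
           real (card {x \<in> upto_height A h N.
                   real_of_int (\<Sum>p\<in>{p. prime p \<and> f p x \<noteq> 0}. f p x) \<ge> A0 * ln (ln N)})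
           \<ge> \<kappa> * real (card (upto_height A h N)) * (ln N) powr (- \<delta>)"
    apply (rule exI[where x=\<delta>])
    apply (rule conjI[OF \<delta>0])
    apply (rule exI[where x="1/8"])
    apply (rule conjI)
     apply simp
    apply (rule exI[where x="exp U0"])
    apply (rule main)
    done
qed

end
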